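(* Let $f\in\mathbf C\{x\}[y]$ be a reduced distinguished polynomial of degree $n\ge2$, written $f=\prod_{i=1}^n(y-a_i)$ with $\sum_ia_i=0$, and let $h=f-\frac{y}{n}f'_y-\frac{x}{n\delta}f'_x$. Let $w\in\mathbf C\{x\}[y]$ be nonzero. Then the Euclidean division of $wh$ by $f$ yields $$wh=w_2f+\lambda(x)f'_y+\tilde w$$ with $w_2\in\mathbf C\{x\}[y]$, $\lambda(x)\in\mathbf C\{x\}$ and $\tilde w\in\mathcal F$ satisfying $\nu(\lambda(x))>n\delta\rho(w)+\delta$, $\rho(w_2)\ge\rho(w)+\rho(h)-1>\rho(w)$, and $\mathrm{val}(\tilde w)>n\delta\rho(w)+\delta$.
   Context: Distinguished: monic in $y$ with $f(0,y)=y^n$; the $a_i$ are pairwise distinct Puiseux series in $\overline K=\bigcup_{e\ge1}\mathbf C[[x^{1/e}]][1/x]$ with valuation $\nu$; $\delta=\inf_i\nu(a_i)>0$. For $w=\sum w_{k,l}x^ky^l\in\mathbf C\{x,y\}$ nonzero, $\rho(w)=\inf\{k/(n\delta)+l/n:w_{k,l}\ne0\}$ (and $\rho(\lambda(x))=\nu(\lambda)/(n\delta)$ for $\lambda\in\mathbf C\{x\}$). $\mathcal F$ is the $\mathbf C((x))$-space of polynomials in $y$ of degree $<n-1$. With $\varepsilon_i=\prod_{j\ne i}(y-a_j)$, for $w=\sum w_i\varepsilon_i$ of degree $<n$, $\mathrm{val}(w)=\inf_i\nu(w_i)$. The Euclidean division gives $wh=w_2f+R$ with $\deg_yR<n$,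 and $R$ is decomposed as $\lambda(x)f'_y+\tilde w$ according to $\mathcal E=\mathcal F\oplus\mathbf C((x))f'_y$. *)

theory Defs
  imports "HOL-Analysis.Analysis" "HOL-Computational_Algebra.Formal_Laurent_Series"
    "HOL-Computational_Algebra.Squarefree"
begin

text \<open>The variable x is the fps/fls variable; polynomials in y are
 elements of type poly over (complex fps) for C{x}[y], over (complex fls) for C((x))[y].
 Puiseux series with a common ramification index e are encoded as Laurent series in
 t = x^(1/e); the embedding C((x)) into C((t)) sends x to t^e.\<close>

definition conv_fps :: "complex fps \<Rightarrow> bool" where
  "conv_fps c \<longleftrightarrow> fps_conv_radius c > 0"

definition conv_poly :: "complex fps poly \<Rightarrow> bool" where
  "conv_poly p \<longleftrightarrow> (\<forall>i. conv_fps (coeff p i))"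

definition fls_ram :: "nat \<Rightarrow> complex fls \<Rightarrow> complex fls" where
  "fls_ram e c = Abs_fls (\<lambda>k. if int e dvd k then fls_nth c (k div int e) else 0)"

definition emb_fls_poly :: "nat \<Rightarrow> complex fls poly \<Rightarrow> complex fls poly" where
  "emb_fls_poly e p = map_poly (fls_ram e) p"

definition fls_poly :: "complex fps poly \<Rightarrow> complex fls poly" where
  "fls_poly p = map_poly fps_to_fls p"

definition nu_pui :: "nat \<Rightarrow> complex fls \<Rightarrow> ereal" where
  "nu_pui e c = (if c = 0 then \<infinity> else ereal (real_of_int (fls_subdegree c) / real e))"

definition nu_fps :: "complex fps \<Rightarrow> ereal" where
  "nu_fps c = (if c = 0 then \<infinity> else ereal (real (subdegree c)))"

definition delta :: "nat \<Rightarrow> nat \<Rightarrow> (nat \<Rightarrow> complex fls) \<Rightarrow> real" where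
  "delta n e a = real_of_ereal (INF i\<in>{..<n}. nu_pui e (a i))"

definition rho :: "nat \<Rightarrow> real \<Rightarrow> complex fps poly \<Rightarrow> ereal" where
  "rho n d w = Inf {ereal (real k / (real n * d) + real l / real n) | k l. coeff w l $ k \<noteq> 0}"

definition eps :: "nat \<Rightarrow> (nat \<Rightarrow> complex fls) \<Rightarrow> nat \<Rightarrow> complex fls poly" where
  "eps n a i = (\<Prod>j\<in>{..<n} - {i}. [:- a j, 1:])"

definition eps_coords :: "nat \<Rightarrow> (nat \<Rightarrow> complex fls) \<Rightarrow> complex fls poly \<Rightarrow> nat \<Rightarrow> complex fls" where
  "eps_coords n a w = (THE c. (\<forall>i\<ge>n. c i = 0) \<and> w = (\<Sum>i<n. smult (c i) (eps n a i)))"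

definition val :: "nat \<Rightarrow> nat \<Rightarrow> (nat \<Rightarrow> complex fls) \<Rightarrow> complex fls poly \<Rightarrow> ereal" where
  "val n e a w = (INF i\<in>{..<n}. nu_pui e (eps_coords n a (emb_fls_poly e w) i))"

definition hpoly :: "nat \<Rightarrow> real \<Rightarrow> complex fps poly \<Rightarrow> complex fps poly" where
  "hpoly n d f = f - smult (fps_const (1 / of_nat n)) ([:0, 1:] * pderiv f)
       - smult (fps_const (1 / (of_nat n * of_real d))) (map_poly (\<lambda>c. fps_X * fps_deriv c) f)"

end

theory Submission
  imports Defs
begin
unbundle Formal_Laurent_Series.fps_syntax

lemma conv_fps_0[simp]: "conv_fps 0" by (simp add: conv_fps_def)
lemma conv_fps_1[simp]: "conv_fps 1" by (simp add: conv_fps_def)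
lemma conv_fps_const[simp]: "conv_fps (fps_const c)" by (simp add: conv_fps_def)
lemma conv_fps_X[simp]: "conv_fps fps_X" by (simp add: conv_fps_def)
lemma conv_fps_add[intro]: "conv_fps a \<Longrightarrow> conv_fps b \<Longrightarrow> conv_fps (a + b)"
  unfolding conv_fps_def using fps_conv_radius_add[of a b] by (auto simp: min_def split: if_splits)
lemma conv_fps_diff[intro]: "conv_fps a \<Longrightarrow> conv_fps b \<Longrightarrow> conv_fps (a - b)"
  unfolding conv_fps_def using fps_conv_radius_diff[of a b] by (auto simp: min_def split: if_splits)
lemma conv_fps_mult[intro]: "conv_fps a \<Longrightarrow> conv_fps b \<Longrightarrow> conv_fps (a * b)"
  unfolding conv_fps_def using fps_conv_radius_mult[of a b] by (auto simp: min_def split: if_splits)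
lemma conv_fps_deriv[intro]: "conv_fps a \<Longrightarrow> conv_fps (fps_deriv a)"
  unfolding conv_fps_def using fps_conv_radius_deriv[of a] by auto
lemma conv_fps_sum[intro]: "(\<And>i. i \<in> S \<Longrightarrow> conv_fps (g i)) \<Longrightarrow> conv_fps (\<Sum>i\<in>S. g i)"
  by (induction S rule: infinite_finite_induct) auto
lemma conv_fps_of_nat[simp]: "conv_fps (of_nat k)"
  by (metis conv_fps_const fps_of_nat)

lemma conv_poly_0[simp]: "conv_poly 0" by (simp add: conv_poly_def)
lemma conv_poly_add[intro]: "conv_poly p \<Longrightarrow> conv_poly q \<Longrightarrow> conv_poly (p + q)"
  by (auto simp: conv_poly_def)
lemma conv_poly_diff[intro]: "conv_poly p \<Longrightarrow> conv_poly q \<Longrightarrow> conv_poly (p - q)"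
  by (auto simp: conv_poly_def)
lemma conv_poly_mult[intro]: "conv_poly p \<Longrightarrow> conv_poly q \<Longrightarrow> conv_poly (p * q)"
  unfolding conv_poly_def coeff_mult by auto
lemma conv_poly_monom[intro]: "conv_fps c \<Longrightarrow> conv_poly (monom c d)"
  by (auto simp: conv_poly_def coeff_monom)
lemma conv_poly_smult[intro]: "conv_fps c \<Longrightarrow> conv_poly p \<Longrightarrow> conv_poly (smult c p)"
  by (auto simp: conv_poly_def)
lemma conv_poly_pderiv[intro]: "conv_poly p \<Longrightarrow> conv_poly (pderiv p)"
  unfolding conv_poly_def coeff_pderiv by (intro allI conv_fps_mult) (auto intro!: conv_fps_add)

lemma degree_sub_lead_less:
  fixes p f :: "'a::idom poly"
  assumes "lead_coeff f = 1" "degree f \<le> degree p" "p \<noteq> 0"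
  shows "degree (p - monom (lead_coeff p) (degree p - degree f) * f) < degree p \<or>
         p - monom (lead_coeff p) (degree p - degree f) * f = 0"
proof -
  let ?q = "monom (lead_coeff p) (degree p - degree f) * f"
  have f0: "f \<noteq> 0" using assms(1) by auto
  have dq: "degree ?q = degree p" using assms f0
    by (simp add: degree_mult_eq degree_monom_eq)
  have lq: "lead_coeff ?q = lead_coeff p" using assms f0
    by (simp add: lead_coeff_mult degree_monom_eq)
  have "degree (p - ?q) \<le> degree p" using dq by (simp add: degree_diff_le)
  moreover have "coeff (p - ?q) (degree p) = 0" using lq dq by simp
  ultimately show ?thesis
    by (metis le_neq_implies_less leading_coeff_0_iff)
qed

lemma conv_division:
  fixes f :: "complex fps poly"
  assumes "conv_poly f" "lead_coeff f = 1" "degree f = n" "n > 0"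
  shows "conv_poly p \<Longrightarrow> \<exists>q r. conv_poly q \<and> conv_poly r \<and> p = q * f + r \<and> degree r < n"
proof (induction "degree p" arbitrary: p rule: less_induct)
  case less
  show ?case
  proof (cases "degree p < n")
    case True
    then show ?thesis using less by (intro exI[of _ 0] exI[of _ p]) auto
  next
    case False
    hence dle: "n \<le> degree p" by auto
    have p0: "p \<noteq> 0" using dle assms(4) by (cases "p = 0") auto
    define p' where "p' = p - monom (lead_coeff p) (degree p - degree f) * f"
    have cp': "conv_poly p'" unfolding p'_def using less assms
      by (intro conv_poly_diff conv_poly_mult conv_poly_monom) (auto simp: conv_poly_def)
    have "\<exists>q r. conv_poly q \<and> conv_poly r \<and> p' = q * f + r \<and> degree r < n"
    proof (cases "p' = 0")
      case True then show ?thesis using assms(4) by (intro exI[of _ 0] exI[of _ 0]) auto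
    next
      case False
      then have "degree p' < degree p" using degree_sub_lead_less[of f p] assms dle p0 unfolding p'_def by auto
      then show ?thesis using less cp' by blast
    qed
    then obtain q r where qr: "conv_poly q" "conv_poly r" "p' = q * f + r" "degree r < n" by blast
    show ?thesis
      apply (rule exI[of _ "q + monom (lead_coeff p) (degree p - degree f)"], rule exI[of _ r])
      using qr less by (auto simp: p'_def algebra_simps conv_poly_def)
  qed
qed


definition psi :: "nat \<Rightarrow> complex fps \<Rightarrow> complex fls" where
  "psi e c = fps_to_fls (c oo fps_X ^ e)"

lemma compose_Xpow_nth:
  assumes "e \<ge> 1"
  shows "(c oo fps_X ^ e) $ j = (if e dvd j then c $ (j div e) else (0::complex))"
proof -
  have "(c oo fps_X ^ e) $ j = (\<Sum>i\<in>{0..j}. (if i = j div e \<and> e dvd j then c $ i else 0))"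
    unfolding fps_compose_nth power_mult[symmetric]
    apply (intro sum.cong refl)
    using assms by (auto simp: fps_X_power_iff)
  also have "\<dots> = (if e dvd j then c $ (j div e) else 0)"
    using assms by (auto simp: sum.delta div_le_dividend)
  finally show ?thesis .
qed

lemma psi_nth:
  assumes "e \<ge> 1"
  shows "psi e c $$ k = (if 0 \<le> k \<and> int e dvd k then c $ nat (k div int e) else 0)"
proof -
  have "psi e c $$ k = (if k < 0 then 0 else (if e dvd nat k then c $ (nat k div e) else 0))"
    unfolding psi_def using compose_Xpow_nth[OF assms] by simp
  also have "\<dots> = (if 0 \<le> k \<and> int e dvd k then c $ nat (k div int e) else 0)"
  proof (cases "k < 0")
    case False
    then obtain j where j: "k = int j" by (metis nat_0_le not_less)
    show ?thesis unfolding j by (simp add: zdiv_int[symmetric])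
  qed simp
  finally show ?thesis .
qed

lemma psi_nth_mult: "e \<ge> 1 \<Longrightarrow> psi e c $$ int (e * s) = c $ s"
  by (simp add: psi_nth)

lemma psi_0[simp]: "psi e 0 = 0" by (simp add: psi_def)
lemma psi_add[simp]: "psi e (a + b) = psi e a + psi e b"
  by (simp add: psi_def fps_compose_add_distrib)
lemma psi_diff[simp]: "psi e (a - b) = psi e a - psi e b"
  by (simp add: psi_def fps_compose_sub_distrib)
lemma psi_uminus[simp]: "psi e (- a) = - psi e a"
  by (simp add: psi_def fps_compose_uminus)
lemma psi_mult[simp]: "e \<ge> 1 \<Longrightarrow> psi e (a * b) = psi e a * psi e b"
  by (simp add: psi_def fps_compose_mult_distrib fls_times_fps_to_fls)
lemma psi_1[simp]: "psi e 1 = 1" by (simp add: psi_def)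
lemma psi_const[simp]: "psi e (fps_const c) = fls_const c"
  by (intro fls_eqI) (simp add: psi_def)
lemma psi_sum: "psi e (\<Sum>i\<in>S. g i) = (\<Sum>i\<in>S. psi e (g i))"
  by (induction S rule: infinite_finite_induct) auto
lemma psi_of_nat[simp]: "psi e (of_nat k) = of_nat k"
  by (metis fls_of_nat fps_of_nat psi_const)

lemma fls_ram_psi:
  assumes "e \<ge> 1"
  shows "fls_ram e (fps_to_fls c) = psi e c"
proof (intro fls_eqI)
  fix k
  have "fls_ram e (fps_to_fls c) $$ k = (if int e dvd k then fps_to_fls c $$ (k div int e) else 0)"
    unfolding fls_ram_def
    apply (rule nth_Abs_fls_ex_lower_bound)
    apply (rule exI[of _ 0])
    using assms by (auto simp: pos_imp_zdiv_neg_iff)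
  also have "\<dots> = psi e c $$ k" using assms
    by (auto simp: psi_nth pos_imp_zdiv_neg_iff)
  finally show "fls_ram e (fps_to_fls c) $$ k = psi e c $$ k" .
qed

lemma emb_psi:
  assumes "e \<ge> 1"
  shows "emb_fls_poly e (fls_poly p) = map_poly (psi e) p"
proof -
  have r0: "fls_ram e 0 = 0" using fls_ram_psi[OF assms, of 0] by simp
  show ?thesis unfolding emb_fls_poly_def fls_poly_def
    by (intro poly_eqI) (simp add: coeff_map_poly r0 fls_ram_psi[OF assms])
qed

locale phom =
  fixes h :: "'a::idom \<Rightarrow> 'b::idom"
  assumes h0: "h 0 = 0" and h1: "h 1 = 1" and hadd: "\<And>x y. h (x + y) = h x + h y"
    and hmult: "\<And>x y. h (x * y) = h x * h y"
begin
lemma huminus: "h (- x) = - h x"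
  by (metis add.commute add.right_inverse eq_neg_iff_add_eq_0 h0 hadd)
lemma hdiff: "h (x - y) = h x - h y"
  using hadd[of x "-y"] huminus by simp
lemma hsum: "h (\<Sum>i\<in>S. g i) = (\<Sum>i\<in>S. h (g i))"
  by (induction S rule: infinite_finite_induct) (auto simp: h0 hadd)
lemma hnat: "h (of_nat k) = of_nat k"
  by (induction k) (auto simp: h0 h1 hadd)
lemma mp_add: "map_poly h (p + q) = map_poly h p + map_poly h q"
  by (intro poly_eqI) (simp add: coeff_map_poly h0 hadd)
lemma mp_diff: "map_poly h (p - q) = map_poly h p - map_poly h q"
  by (intro poly_eqI) (simp add: coeff_map_poly h0 hdiff)
lemma mp_mult: "map_poly h (p * q) = map_poly h p * map_poly h q"
  by (intro poly_eqI) (simp add: coeff_map_poly h0 coeff_mult hsum hmult)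
lemma mp_smult: "map_poly h (smult c p) = smult (h c) (map_poly h p)"
  by (intro poly_eqI) (simp add: coeff_map_poly h0 hmult)
lemma mp_pderiv: "map_poly h (pderiv p) = pderiv (map_poly h p)"
  by (intro poly_eqI) (simp add: coeff_map_poly h0 hmult coeff_pderiv hnat[of "Suc _", simplified])
lemma mp_pCons: "map_poly h (pCons c p) = pCons (h c) (map_poly h p)"
  by (simp add: map_poly_pCons h0)
lemma mp_X: "map_poly h [:0, 1:] = [:0, 1:]"
  by (simp add: map_poly_pCons h0 h1)
end

lemma phom_psi: "e \<ge> 1 \<Longrightarrow> phom (psi e)"
  by unfold_locales auto

lemma phom_fps_to_fls: "phom (fps_to_fls :: complex fps \<Rightarrow> complex fls)"
  by unfold_locales (auto simp: fls_times_fps_to_fls)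


definition vge :: "complex fls \<Rightarrow> int \<Rightarrow> bool" where
  "vge c N \<longleftrightarrow> (\<forall>k<N. c $$ k = 0)"

lemma vge_0[simp]: "vge 0 N" by (simp add: vge_def)
lemma vge_mono: "vge c A \<Longrightarrow> B \<le> A \<Longrightarrow> vge c B" by (simp add: vge_def)
lemma vge_add: "vge a N \<Longrightarrow> vge b N \<Longrightarrow> vge (a + b) N" by (simp add: vge_def)
lemma vge_diff: "vge a N \<Longrightarrow> vge b N \<Longrightarrow> vge (a - b) N" by (simp add: vge_def)
lemma vge_uminus: "vge a N \<Longrightarrow> vge (- a) N" by (simp add: vge_def)
lemma vge_const: "vge (fls_const c) 0" by (simp add: vge_def)
lemma vge_subdeg: "vge c (fls_subdegree c)"
  unfolding vge_def by (metis fls_eq0_below_subdegree)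
lemma vge_mult:
  assumes "vge a A" "vge b B" shows "vge (a * b) (A + B)"
proof (cases "a = 0 \<or> b = 0")
  case False
  then have "A \<le> fls_subdegree a" "B \<le> fls_subdegree b"
    using assms by (auto simp: vge_def intro: fls_subdegree_geI)
  then show ?thesis unfolding vge_def by (auto intro: fls_times_nth_eq0)
qed auto
lemma vge_sum: "(\<And>i. i \<in> S \<Longrightarrow> vge (g i) N) \<Longrightarrow> vge (\<Sum>i\<in>S. g i) N"
  by (induction S rule: infinite_finite_induct) (auto intro: vge_add)
lemma vge_power: "vge a A \<Longrightarrow> vge (a ^ l) (int l * A)"
proof (induction l)
  case 0 then show ?case by (simp add: vge_def)
next
  case (Suc l)
  then show ?case using vge_mult[of a A "a^l" "int l * A"] by (simp add: algebra_simps)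
qed
lemma vge_constmult: "vge a A \<Longrightarrow> vge (fls_const c * a) A"
  using vge_mult[OF vge_const] by (metis add_0)

lemma vge_nu:
  assumes "vge c N" "e \<ge> 1"
  shows "ereal (real_of_int N / real e) \<le> nu_pui e c"
proof (cases "c = 0")
  case False
  then have "N \<le> fls_subdegree c" using assms by (auto simp: vge_def intro: fls_subdegree_geI)
  then show ?thesis using False assms by (simp add: nu_pui_def divide_right_mono)
qed (simp add: nu_pui_def)

lemma vge_psi:
  assumes "e \<ge> 1" "\<And>s. int (e * s) < N \<Longrightarrow> c $ s = 0"
  shows "vge (psi e c) N"
  unfolding vge_def
proof (intro allI impI)
  fix k assume k: "k < N"
  show "psi e c $$ k = 0"
  proof (cases "0 \<le> k \<and> int e dvd k")
    case True
    then obtain j where j: "k = int e * j" by (auto elim: dvdE)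
    with True assms(1) have "j \<ge> 0" by (simp add: zero_le_mult_iff)
    then obtain s where s: "k = int e * int s" using j by (metis nonneg_int_cases)
    then show ?thesis using assms k by (simp add: psi_nth)
  qed (use assms in \<open>auto simp: psi_nth\<close>)
qed

definition Dt :: "complex fls \<Rightarrow> complex fls" where
  "Dt c = fls_X * fls_deriv c"

lemma Dt_nth[simp]: "Dt c $$ k = of_int k * c $$ k"
  by (simp add: Dt_def fls_X_times_conv_shift)
lemma Dt_0[simp]: "Dt 0 = 0" by (simp add: Dt_def)
lemma Dt_1[simp]: "Dt 1 = 0" by (simp add: Dt_def)
lemma Dt_add[simp]: "Dt (a + b) = Dt a + Dt b" by (simp add: Dt_def algebra_simps)
lemma Dt_diff[simp]: "Dt (a - b) = Dt a - Dt b" by (simp add: Dt_def algebra_simps)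
lemma Dt_mult: "Dt (a * b) = Dt a * b + a * Dt b" by (simp add: Dt_def algebra_simps)

lemma psi_Xderiv:
  assumes "e \<ge> 1"
  shows "psi e (fps_X * fps_deriv c) = fls_const (1 / of_nat e) * Dt (psi e c)"
proof (intro fls_eqI)
  fix k
  show "psi e (fps_X * fps_deriv c) $$ k = (fls_const (1 / of_nat e) * Dt (psi e c)) $$ k"
  proof (cases "0 \<le> k \<and> int e dvd k")
    case True
    then obtain j where j: "k = int e * j" by (auto elim: dvdE)
    with True assms(1) have "j \<ge> 0" by (simp add: zero_le_mult_iff)
    then obtain s where s: "k = int (e * s)" using j by (metis nonneg_int_cases of_nat_mult)
    have "psi e (fps_X * fps_deriv c) $$ k = of_nat s * c $ s"
      using psi_nth_mult[OF assms, of "fps_X * fps_deriv c" s] unfolding s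
      by (cases s) (simp_all del: psi_mult)
    moreover have "(fls_const (1 / of_nat e) * Dt (psi e c)) $$ k = of_nat s * c $ s"
      using assms psi_nth_mult[OF assms, of c s] unfolding s by (simp add: field_simps)
    ultimately show ?thesis by simp
  qed (use assms in \<open>auto simp: psi_nth simp del: psi_mult\<close>)
qed

definition Dh :: "complex fls poly \<Rightarrow> complex fls poly" where
  "Dh p = map_poly Dt p"

lemma coeff_Dh[simp]: "coeff (Dh p) l = Dt (coeff p l)"
  by (simp add: Dh_def coeff_map_poly)

lemma Dh_lin: "Dh (p * [:- a, 1:]) = Dh p * [:- a, 1:] - [:Dt a:] * p"
proof (intro poly_eqI)
  fix l
  have c: "\<And>q. coeff (q * [:- a, 1:]) l = (case l of 0 \<Rightarrow> 0 | Suc j \<Rightarrow> coeff q j) - a * coeff q l"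
    by (simp add: mult_pCons_right coeff_pCons split: nat.split)
  show "coeff (Dh (p * [:- a, 1:])) l = coeff (Dh p * [:- a, 1:] - [:Dt a:] * p) l"
    unfolding coeff_diff coeff_Dh c by (auto simp: Dt_mult algebra_simps split: nat.split)
qed

lemma euler_prod:
  fixes a :: "nat \<Rightarrow> complex fls" and M :: "complex fls"
  shows "[:of_nat N * M:] * (\<Prod>i<N. [:- a i, 1:]) - [:M:] * [:0, 1:] * pderiv (\<Prod>i<N. [:- a i, 1:])
          - Dh (\<Prod>i<N. [:- a i, 1:])
        = (\<Sum>i<N. [:Dt (a i) - M * a i:] * (\<Prod>j\<in>{..<N} - {i}. [:- a j, 1:]))"
proof (induction N)
  case 0
  then show ?case by (simp add: Dh_def map_poly_1)
next
  case (Suc N)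
  define P where "P = (\<Prod>i<N. [:- a i, 1:])"
  define L where "L = [:- a N, 1:]"
  have PS: "(\<Prod>i<Suc N. [:- a i, 1:]) = P * L" by (simp add: P_def L_def mult.commute)
  have dL: "pderiv L = 1" by (simp add: L_def pderiv_pCons)
  have Lx: "L = [:0, 1:] - [:a N:]" by (simp add: L_def)
  have sumS: "(\<Sum>i<Suc N. [:Dt (a i) - M * a i:] * (\<Prod>j\<in>{..<Suc N} - {i}. [:- a j, 1:]))
     = L * (\<Sum>i<N. [:Dt (a i) - M * a i:] * (\<Prod>j\<in>{..<N} - {i}. [:- a j, 1:]))
       + [:Dt (a N) - M * a N:] * P"
  proof -
    have "\<And>i. i < N \<Longrightarrow> (\<Prod>j\<in>{..<Suc N} - {i}. [:- a j, 1:]) = L * (\<Prod>j\<in>{..<N} - {i}. [:- a j, 1:])"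
    proof -
      fix i assume "i < N"
      then have "{..<Suc N} - {i} = insert N ({..<N} - {i})" by auto
      then show "(\<Prod>j\<in>{..<Suc N} - {i}. [:- a j, 1:]) = L * (\<Prod>j\<in>{..<N} - {i}. [:- a j, 1:])"
        by (simp add: L_def)
    qed
    moreover have "{..<Suc N} - {N} = {..<N}" by auto
    ultimately show ?thesis
      by (simp add: P_def sum_distrib_left algebra_simps)
  qed
  have "[:of_nat (Suc N) * M:] * (P * L) - [:M:] * [:0, 1:] * pderiv (P * L) - Dh (P * L)
     = L * ([:of_nat N * M:] * P - [:M:] * [:0, 1:] * pderiv P - Dh P) + [:Dt (a N) - M * a N:] * P"
  proof -
    have c1: "[:of_nat (Suc N) * M:] = [:of_nat N * M:] + [:M:]" by (simp add: algebra_simps)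
    have c2: "[:Dt (a N) - M * a N:] = [:Dt (a N):] - [:M:] * [:a N:]" by simp
    have d: "Dh (P * L) = Dh P * L - [:Dt (a N):] * P" unfolding L_def by (rule Dh_lin)
    show ?thesis unfolding c1 c2 d pderiv_mult dL
      using Lx by algebra
  qed
  then show ?case using Suc unfolding PS sumS by (simp add: P_def)
qed


lemma prod_split:
  "i < n \<Longrightarrow> (\<Prod>j<n. [:- a j, 1:]) = [:- a i, 1:] * eps n a i"
  unfolding eps_def by (metis finite_lessThan lessThan_iff prod.remove)

lemma poly_eps_other: "j < n \<Longrightarrow> i \<noteq> j \<Longrightarrow> poly (eps n a i) (a j) = 0"
  unfolding eps_def poly_prod by (rule prod_zero) auto

lemma poly_eps_self: "inj_on a {..<n} \<Longrightarrow> i < n \<Longrightarrow> poly (eps n a i) (a i) \<noteq> 0"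
  unfolding eps_def poly_prod by (auto simp: inj_on_def)

lemma poly_eps_sum:
  assumes "j < n"
  shows "poly (\<Sum>i<n. smult (c i) (eps n a i)) (a j) = c j * poly (eps n a j) (a j)"
proof -
  have "poly (\<Sum>i<n. smult (c i) (eps n a i)) (a j) = (\<Sum>i<n. c i * poly (eps n a i) (a j))"
    by (simp add: poly_sum)
  also have "\<dots> = (\<Sum>i\<in>{j}. c i * poly (eps n a i) (a j))"
    using assms by (intro sum.mono_neutral_right) (auto simp: poly_eps_other)
  finally show ?thesis by simp
qed

lemma eps_coords_sum:
  assumes inj: "inj_on a {..<n}" and j: "j < n"
  shows "eps_coords n a (\<Sum>i<n. smult (c i) (eps n a i)) j = c j"
proof -
  define c' where "c' = (\<lambda>i. if i < n then c i else 0)"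
  have sc: "(\<Sum>i<n. smult (c i) (eps n a i)) = (\<Sum>i<n. smult (c' i) (eps n a i))"
    by (simp add: c'_def)
  have "eps_coords n a (\<Sum>i<n. smult (c i) (eps n a i)) = c'"
    unfolding eps_coords_def
  proof (rule the_equality)
    show "(\<forall>i\<ge>n. c' i = 0) \<and> (\<Sum>i<n. smult (c i) (eps n a i)) = (\<Sum>i<n. smult (c' i) (eps n a i))"
      using sc by (simp add: c'_def)
  next
    fix d assume d: "(\<forall>i\<ge>n. d i = 0) \<and> (\<Sum>i<n. smult (c i) (eps n a i)) = (\<Sum>i<n. smult (d i) (eps n a i))"
    show "d = c'"
    proof
      fix i show "d i = c' i"
      proof (cases "i < n")
        case True
        have "d i * poly (eps n a i) (a i) = c i * poly (eps n a i) (a i)"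
          using d poly_eps_sum[OF True, of c a] poly_eps_sum[OF True, of d a] by metis
        then show ?thesis using poly_eps_self[OF inj True] True by (simp add: c'_def)
      qed (use d in \<open>auto simp: c'_def\<close>)
    qed
  qed
  then show ?thesis using j by (simp add: c'_def)
qed

lemma prod_lin_degree: "finite S \<Longrightarrow> degree (\<Prod>j\<in>S. [:- a j, 1::'a::idom:]) = card S"
  by (subst degree_prod_sum_eq) auto

lemma prod_lin_lead: "lead_coeff (\<Prod>j\<in>S. [:- a j, 1::'a::idom:]) = 1"
  by (simp add: lead_coeff_prod)

lemma eps_degree: "i < n \<Longrightarrow> degree (eps n a i) = n - 1"
  unfolding eps_def by (subst prod_lin_degree) auto

lemma eps_lead: "i < n \<Longrightarrow> coeff (eps n a i) (n - 1) = 1"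
  using prod_lin_lead[of a "{..<n} - {i}"] eps_degree[of i n a] unfolding eps_def by simp

lemma rho_value:
  assumes "n > 0" "m > 0" "e > 0"
  shows "real k / (real n * (real m / real e)) + real l / real n = real (e*k + l*m) / real (n*m)"
  using assms by (simp add: field_simps)

lemma rho_ge:
  fixes p :: "complex fps poly"
  assumes "n > 0" "m > 0" "e > 0"
    and "\<And>k l. coeff p l $ k \<noteq> 0 \<Longrightarrow> B \<le> real (e*k + l*m)"
  shows "ereal (B / real (n*m)) \<le> rho n (real m / real e) p"
  unfolding rho_def
proof (rule Inf_greatest, clarify)
  fix k l assume "coeff p l $ k \<noteq> 0"
  then have "B \<le> real (e*k + l*m)" using assms by auto
  then show "ereal (B / real (n*m)) \<le> ereal (real k / (real n * (real m / real e)) + real l / real n)"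
    unfolding rho_value[OF assms(1-3)] using assms by (simp add: divide_right_mono)
qed

lemma rho_le:
  fixes p :: "complex fps poly"
  assumes "n > 0" "m > 0" "e > 0" "coeff p l $ k \<noteq> 0"
  shows "rho n (real m / real e) p \<le> ereal (real (e*k + l*m) / real (n*m))"
  unfolding rho_def rho_value[OF assms(1-3), symmetric]
  by (rule Inf_lower) (use assms in blast)

lemma rho_zero: "rho n d 0 = \<infinity>"
  by (simp add: rho_def top_ereal_def)

lemma poly_mult_monomial_nz:
  fixes p q :: "complex fps poly"
  assumes "coeff (p * q) l $ k \<noteq> 0"
  shows "\<exists>i j. i \<le> l \<and> j \<le> k \<and> coeff p i $ j \<noteq> 0 \<and> coeff q (l - i) $ (k - j) \<noteq> 0"
proof (rule ccontr)
  assume "\<not> ?thesis"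
  then have "\<And>i j. i \<le> l \<Longrightarrow> j \<le> k \<Longrightarrow> coeff p i $ j * coeff q (l - i) $ (k - j) = 0" by auto
  then have "coeff (p * q) l $ k = 0"
    unfolding coeff_mult fps_sum_nth fps_mult_nth by (auto intro!: sum.neutral)
  then show False using assms by simp
qed

lemma min_monomial:
  fixes p :: "complex fps poly"
  assumes "p \<noteq> 0"
  shows "\<exists>k0 l0. coeff p l0 $ k0 \<noteq> 0 \<and> (\<forall>k l. coeff p l $ k \<noteq> 0 \<longrightarrow> e*k0 + l0*m \<le> e*k + l*m)"
proof -
  obtain l where "coeff p l \<noteq> 0" using assms by (metis leading_coeff_0_iff)
  then obtain k where "coeff p l $ k \<noteq> 0" by (metis fps_nonzero_nth)
  then have "(\<lambda>(k,l). coeff p l $ k \<noteq> 0) (k, l)" by auto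
  from ex_has_least_nat[of "\<lambda>(k,l). coeff p l $ k \<noteq> 0", OF this, of "\<lambda>(k,l). e*k + l*m"]
  show ?thesis by fastforce
qed

lemma vge_poly_eval:
  assumes e: "e \<ge> 1" and W: "\<And>k l. coeff w l $ k \<noteq> 0 \<Longrightarrow> W \<le> e*k + l*m"
    and a: "vge x (int m)"
  shows "vge (poly (map_poly (psi e) w) x) (int W)"
  unfolding poly_altdef
proof (rule vge_sum)
  fix i
  have "vge (psi e (coeff w i)) (int W - int i * int m)"
  proof (rule vge_psi[OF e])
    fix s assume "int (e * s) < int W - int i * int m"
    show "coeff w i $ s = 0"
    proof (rule ccontr)
      assume "coeff w i $ s \<noteq> 0"
      hence "int W \<le> int (e * s) + int i * int m" using W[of i s] by (metis of_nat_add of_nat_le_iff of_nat_mult)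
      then show False using \<open>int (e * s) < int W - int i * int m\<close> by linarith
    qed
  qed
  moreover have "vge (x ^ i) (int i * int m)" using vge_power[OF a] .
  ultimately have "vge (psi e (coeff w i) * x ^ i) (int W)" using vge_mult by fastforce
  then show "vge (coeff (map_poly (psi e) w) i * x ^ i) (int W)"
    by (simp add: coeff_map_poly)
qed


lemma prod_lin_coeff_vge:
  assumes "\<And>i. i < N \<Longrightarrow> vge (a i) M"
  shows "vge (coeff (\<Prod>i<N. [:- a i, 1:]) l) ((int N - int l) * M)"
  using assms
proof (induction N arbitrary: l)
  case 0
  then show ?case by (cases l) (auto simp: vge_def)
next
  case (Suc N)
  define P where "P = (\<Prod>i<N. [:- a i, 1:])"
  have PS: "(\<Prod>i<Suc N. [:- a i, 1:]) = P * [:- a N, 1:]" by (simp add: P_def)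
  have c: "coeff (P * [:- a N, 1:]) l = (case l of 0 \<Rightarrow> 0 | Suc j \<Rightarrow> coeff P j) - a N * coeff P l"
    by (simp add: mult_pCons_right coeff_pCons split: nat.split)
  have IH: "\<And>l. vge (coeff P l) ((int N - int l) * M)" unfolding P_def using Suc by auto
  have t2: "vge (a N * coeff P l) ((int (Suc N) - int l) * M)"
    using vge_mult[OF Suc.prems[of N] IH[of l]] by (simp add: algebra_simps)
  have t1: "vge (case l of 0 \<Rightarrow> 0 | Suc j \<Rightarrow> coeff P j) ((int (Suc N) - int l) * M)"
  proof (cases l)
    case (Suc j)
    then show ?thesis using IH[of j] by (simp add: algebra_simps)
  qed simp
  show ?case unfolding PS c by (rule vge_diff[OF t1 t2])
qed

lemma degree_less_of_coeff:
  "degree p \<le> d \<Longrightarrow> coeff p d = 0 \<Longrightarrow> d > 0 \<Longrightarrow> degree p < d"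
  by (metis le_neq_implies_less leading_coeff_0_iff degree_0)

lemma vge_Dt_shift:
  assumes "vge x (int m)"
  shows "vge (Dt x - of_nat m * x) (int m + 1)"
  unfolding vge_def
proof (intro allI impI)
  fix k :: int assume k: "k < int m + 1"
  show "(Dt x - of_nat m * x) $$ k = 0"
  proof (cases "k < int m")
    case True then show ?thesis using assms by (simp add: vge_def fls_of_nat)
  next
    case False then have "k = int m" using k by simp
    then show ?thesis by (simp add: fls_of_nat)
  qed
qed


lemma smult_sum_right: "smult c (\<Sum>i\<in>S. g i) = (\<Sum>i\<in>S. smult c (g i))"
  by (induction S rule: infinite_finite_induct) (auto simp: smult_add_right)

theorem mainTheorem18:
  fixes f w :: "complex fps poly" and n e :: nat and a :: "nat \<Rightarrow> complex fls"
  assumes n2: "n \<ge> 2"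
    and f_conv: "conv_poly f"
    and f_deg: "degree f = n"
    and f_monic: "lead_coeff f = 1"
    and f_dist: "map_poly (\<lambda>c. c $ 0) f = monom 1 n"
    and f_red: "squarefree f"
    and e_pos: "e \<ge> 1"
    and f_fact: "emb_fls_poly e (fls_poly f) = (\<Prod>i<n. [:- a i, 1:])"
    and a_dist: "inj_on a {..<n}"
    and a_sum: "(\<Sum>i<n. a i) = 0"
    and w_conv: "conv_poly w"
    and w_nz: "w \<noteq> 0"
  shows "\<exists>w2 lam wt.
     conv_poly w2 \<and> conv_fps lam \<and> degree wt < n - 1 \<and>
     fls_poly (w * hpoly n (delta n e a) f)
       = fls_poly (w2 * f) + smult (fps_to_fls lam) (fls_poly (pderiv f)) + wt \<and>
     nu_fps lam > ereal (real n * delta n e a) * rho n (delta n e a) w + ereal (delta n e a) \<and>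
     rho n (delta n e a) w2 \<ge> rho n (delta n e a) w + rho n (delta n e a) (hpoly n (delta n e a) f) - 1 \<and>
     rho n (delta n e a) w + rho n (delta n e a) (hpoly n (delta n e a) f) - 1 > rho n (delta n e a) w \<and>
     val n e a wt > ereal (real n * delta n e a) * rho n (delta n e a) w + ereal (delta n e a)"
proof -
  interpret ps: phom "psi e" using phom_psi[OF e_pos] .
  interpret fl: phom "fps_to_fls :: complex fps \<Rightarrow> complex fls" using phom_fps_to_fls .
  define P where "P = (\<Prod>i<n. [:- a i, 1:])"
  have n0: "n > 0" using n2 by simp
  have e0: "e > 0" using e_pos by simp
  have fP: "map_poly (psi e) f = P" using f_fact emb_psi[OF e_pos] by (simp add: P_def)
  have coeffP: "\<And>l. coeff P l = psi e (coeff f l)" using fP[symmetric] by (simp add: coeff_map_poly)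
  have degP: "degree P = n" unfolding P_def by (subst prod_lin_degree) auto
  have leadP: "coeff P n = 1" using prod_lin_lead[of a "{..<n}"] degP by (simp add: P_def)
  have fn1: "coeff f n = 1" using f_monic f_deg by simp
  have f_hi: "\<And>l. l > n \<Longrightarrow> coeff f l = 0" using f_deg by (simp add: coeff_eq_0)
  have f_low0: "\<And>l. l < n \<Longrightarrow> coeff f l $ 0 = 0"
  proof -
    fix l assume "l < n"
    have "coeff (map_poly (\<lambda>c. c $ 0) f) l = coeff f l $ 0" by (simp add: coeff_map_poly)
    then show "coeff f l $ 0 = 0" using f_dist \<open>l < n\<close> by (simp add: coeff_monom)
  qed
  have Pa0: "\<And>i. i < n \<Longrightarrow> poly P (a i) = 0"
    unfolding P_def poly_prod by (rule prod_zero) auto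
  have root_pos: "\<And>i. i < n \<Longrightarrow> a i \<noteq> 0 \<Longrightarrow> fls_subdegree (a i) \<ge> 1"
  proof (rule ccontr)
    fix i assume i: "i < n" "a i \<noteq> 0" "\<not> fls_subdegree (a i) \<ge> 1"
    define s where "s = fls_subdegree (a i)"
    have s0: "s \<le> 0" using i s_def by simp
    have "poly P (a i) = (\<Sum>l\<le>n. coeff P l * a i ^ l)" by (simp add: poly_altdef degP)
    also have "\<dots> = (\<Sum>l<n. coeff P l * a i ^ l) + a i ^ n"
      by (simp add: lessThan_Suc_atMost[symmetric] leadP)
    finally have eq: "poly P (a i) = (\<Sum>l<n. coeff P l * a i ^ l) + a i ^ n" .
    have v: "vge (\<Sum>l<n. coeff P l * a i ^ l) (int n * s + 1)"
    proof (rule vge_sum)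
      fix l assume l: "l \<in> {..<n}"
      have "vge (coeff P l) 1" unfolding coeffP
      proof (rule vge_psi[OF e_pos])
        fix s' assume "int (e * s') < 1"
        then have "e * s' = 0" by linarith
        then have "s' = 0" using e_pos by simp
        then show "coeff f l $ s' = 0" using f_low0 l by simp
      qed
      moreover have "vge (a i ^ l) (int l * s)" using vge_power[OF vge_subdeg] s_def by simp
      ultimately have "vge (coeff P l * a i ^ l) (1 + int l * s)" using vge_mult by blast
      moreover have "int n * s + 1 \<le> 1 + int l * s"
      proof -
        have "(int n - int l) * s \<le> 0" using l s0 by (simp add: mult_nonneg_nonpos)
        then show ?thesis by (simp add: algebra_simps)
      qed
      ultimately show "vge (coeff P l * a i ^ l) (int n * s + 1)" using vge_mono by blast
    qed
    have "a i ^ n \<noteq> 0" using i by simp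
    then have "(a i ^ n) $$ (int n * s) \<noteq> 0"
      using nth_fls_subdegree_nonzero[of "a i ^ n"] by (simp add: fls_subdegree_pow s_def)
    moreover have "(\<Sum>l<n. coeff P l * a i ^ l) $$ (int n * s) = 0" using v by (simp add: vge_def)
    ultimately have "poly P (a i) $$ (int n * s) \<noteq> 0" unfolding eq by simp
    then show False using Pa0[OF i(1)] by simp
  qed
  define S where "S = {fls_subdegree (a i) | i. i < n \<and> a i \<noteq> 0}"
  have Sfin: "finite S" unfolding S_def by simp
  have "a 0 \<noteq> a 1" using a_dist n2 unfolding inj_on_def
    by (metis lessThan_iff less_le_trans one_less_numeral_iff semiring_norm(76) zero_less_numeral zero_neq_one)
  then obtain i1 where i1: "i1 < n" "a i1 \<noteq> 0" using n2 by (metis less_le_trans one_less_numeral_iff semiring_norm(76) zero_less_numeral)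
  have Sne: "S \<noteq> {}" using i1 by (auto simp: S_def)
  define m where "m = nat (Min S)"
  have mS: "int m = Min S" "Min S \<ge> 1"
  proof -
    have "Min S \<in> S" using Sfin Sne by simp
    then show "Min S \<ge> 1" using root_pos by (auto simp: S_def)
    then show "int m = Min S" by (simp add: m_def)
  qed
  have m1: "m \<ge> 1" using mS by simp
  have m0: "m > 0" using m1 by simp
  obtain i0 where i0: "i0 < n" "a i0 \<noteq> 0" "fls_subdegree (a i0) = int m"
    using Min_in[OF Sfin Sne] mS by (auto simp: S_def)
  have a_vge: "\<And>i. i < n \<Longrightarrow> vge (a i) (int m)"
  proof -
    fix i assume i: "i < n"
    show "vge (a i) (int m)"
    proof (cases "a i = 0")
      case False
      then have "fls_subdegree (a i) \<in> S" using i by (auto simp: S_def)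
      then have "int m \<le> fls_subdegree (a i)" using mS Sfin by simp
      then show ?thesis using vge_subdeg vge_mono by blast
    qed simp
  qed
  have delta_eq: "delta n e a = real m / real e"
  proof -
    have "(INF i\<in>{..<n}. nu_pui e (a i)) = ereal (real m / real e)"
    proof (rule antisym)
      show "(INF i\<in>{..<n}. nu_pui e (a i)) \<le> ereal (real m / real e)"
        using i0 by (intro INF_lower2[of i0]) (auto simp: nu_pui_def)
      show "ereal (real m / real e) \<le> (INF i\<in>{..<n}. nu_pui e (a i))"
        using a_vge vge_nu[OF _ e_pos] by (intro INF_greatest) fastforce
    qed
    then show ?thesis by (simp add: delta_def)
  qed
  define d where "d = delta n e a"
  have d_eq: "d = real m / real e" using delta_eq d_def by simp
  define h where "h = hpoly n d f"
  have dc: "complex_of_real d = of_nat m / of_nat e" by (simp add: d_eq)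
  have cYp: "\<And>p l. coeff ([:0, 1:] * pderiv p) l = of_nat l * coeff (p :: complex fps poly) l"
  proof -
    fix p :: "complex fps poly" and l
    show "coeff ([:0, 1:] * pderiv p) l = of_nat l * coeff p l"
      by (cases l) (simp_all add: coeff_pderiv mult_pCons_left)
  qed
  have hcoeff: "\<And>l k. coeff h l $ k = coeff f l $ k *
      (1 - of_nat l / of_nat n - of_nat k / (of_nat n * of_real d))"
  proof -
    fix l k
    have "coeff h l = coeff f l - fps_const (1 / of_nat n) * (of_nat l * coeff f l)
        - fps_const (1 / (of_nat n * of_real d)) * (fps_X * fps_deriv (coeff f l))"
      unfolding h_def hpoly_def coeff_diff coeff_smult cYp by (simp add: coeff_map_poly)
    moreover have "(coeff f l - fps_const (1 / of_nat n) * (of_nat l * coeff f l)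
        - fps_const (1 / (of_nat n * of_real d)) * (fps_X * fps_deriv (coeff f l))) $ k
       = coeff f l $ k - 1 / of_nat n * (of_nat l * coeff f l $ k)
         - 1 / (of_nat n * of_real d) * (of_nat k * coeff f l $ k)"
      by (cases k) (simp_all add: fps_of_nat[symmetric] del: fps_of_nat)
    ultimately show "coeff h l $ k = coeff f l $ k *
      (1 - of_nat l / of_nat n - of_nat k / (of_nat n * of_real d))"
      by (simp add: divide_inverse ring_distribs mult_ac)
  qed
  have f_wt: "\<And>k l. coeff f l $ k \<noteq> 0 \<Longrightarrow> n * m \<le> e * k + l * m"
  proof -
    fix k l assume nz: "coeff f l $ k \<noteq> 0"
    then have ln: "l \<le> n" using f_hi by (metis fps_zero_nth not_le)
    have "vge (coeff P l) ((int n - int l) * int m)" unfolding P_def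
      by (rule prod_lin_coeff_vge) (use a_vge in auto)
    moreover have "coeff P l $$ int (e * k) \<noteq> 0" using nz psi_nth_mult[OF e_pos, of "coeff f l" k] by (simp add: coeffP)
    ultimately have "(int n - int l) * int m \<le> int (e * k)" by (meson vge_def not_le)
    then have "int (n * m) \<le> int (e * k + l * m)" using ln by (simp add: algebra_simps of_nat_diff)
    then show "n * m \<le> e * k + l * m" by linarith
  qed
  have h_wt: "\<And>k l. coeff h l $ k \<noteq> 0 \<Longrightarrow> n * m + 1 \<le> e * k + l * m"
  proof -
    fix k l assume nz: "coeff h l $ k \<noteq> 0"
    then have fnz: "coeff f l $ k \<noteq> 0" by (simp add: hcoeff)
    have "e * k + l * m \<noteq> n * m"
    proof
      assume eq: "e * k + l * m = n * m"
      have "(1 - of_nat l / of_nat n - of_nat k / (of_nat n * of_real d) :: complex) * (of_nat n * of_nat m)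
            = of_nat (n * m) - of_nat (l * m) - of_nat (e * k)"
        using n0 m0 e0 unfolding dc by (simp add: field_simps)
      also have "\<dots> = 0" unfolding eq[symmetric] by simp
      finally have "(1 - of_nat l / of_nat n - of_nat k / (of_nat n * of_real d) :: complex) = 0"
        using n0 m0 by simp
      then show False using nz by (simp add: hcoeff)
    qed
    then show "n * m + 1 \<le> e * k + l * m" using f_wt[OF fnz] by linarith
  qed
  have h_conv: "conv_poly h"
    unfolding h_def hpoly_def using f_conv
    by (intro conv_poly_diff conv_poly_smult conv_poly_mult conv_poly_pderiv)
       (auto simp: conv_poly_def coeff_map_poly coeff_pCons split: nat.split intro!: conv_fps_mult conv_fps_deriv)
  obtain q r where qr: "conv_poly q" "conv_poly r" "w * h = q * f + r" "degree r < n"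
    using conv_division[OF f_conv f_monic f_deg n0, of "w * h"] w_conv h_conv by blast
  define lam where "lam = fps_const (1 / of_nat n) * coeff r (n - 1)"
  define wt' where "wt' = r - smult lam (pderiv f)"
  define wt where "wt = fls_poly wt'"
  have lam_conv: "conv_fps lam" using qr(2) by (auto simp: lam_def conv_poly_def)
  have eqn: "fls_poly (w * h) = fls_poly (q * f) + smult (fps_to_fls lam) (fls_poly (pderiv f)) + wt"
    unfolding wt_def wt'_def fls_poly_def qr(3) fl.mp_add fl.mp_diff fl.mp_smult by simp
  have deg_pf: "degree (pderiv f) \<le> n - 1"
    by (rule degree_le) (auto simp: coeff_pderiv f_hi)
  have "degree wt' \<le> n - 1" unfolding wt'_def using qr(4) deg_pf
    by (intro degree_diff_le) (auto intro: order.trans[OF degree_smult_le])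
  moreover have "coeff wt' (n - 1) = 0"
  proof -
    have "coeff wt' (n - 1) = coeff r (n - 1) - lam * (of_nat n * coeff f n)"
      using n0 by (simp add: wt'_def coeff_pderiv)
    also have "\<dots> = 0" using n0 by (simp add: lam_def fn1 fps_of_nat[symmetric] del: fps_of_nat)
    finally show ?thesis .
  qed
  ultimately have "degree wt' < n - 1" using n2 by (intro degree_less_of_coeff) auto
  then have deg_wt: "degree wt < n - 1" unfolding wt_def fls_poly_def
    using map_poly_degree_leq le_less_trans by blast
  define Wt where "Wt = map_poly (psi e) w"
  define Ht where "Ht = map_poly (psi e) h"
  define Qt where "Qt = map_poly (psi e) q"
  define Rt where "Rt = map_poly (psi e) r"
  have tw: "Wt * Ht = Qt * P + Rt"
    using arg_cong[OF qr(3), of "map_poly (psi e)"] unfolding ps.mp_mult ps.mp_add fP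
    by (simp add: Wt_def Ht_def Qt_def Rt_def)
  define M :: "complex fls" where "M = of_nat m"
  have nM0: "of_nat n * M \<noteq> 0" using n0 m0 by (simp add: M_def)
  have mpX: "map_poly (psi e) (map_poly (\<lambda>c. fps_X * fps_deriv c) f) = smult (fls_const (1 / of_nat e)) (Dh P)"
    by (intro poly_eqI) (simp add: coeff_map_poly psi_Xderiv[OF e_pos] coeffP del: psi_mult)
  have Ht_eq: "smult (of_nat n * M) Ht = smult (of_nat n * M) P - smult M ([:0, 1:] * pderiv P) - Dh P"
  proof -
    have Hpre: "Ht = P - smult (fls_const (1 / of_nat n)) ([:0, 1:] * pderiv P)
            - smult (fls_const (1 / (of_nat n * of_real d))) (smult (fls_const (1 / of_nat e)) (Dh P))"
      unfolding Ht_def h_def hpoly_def ps.mp_diff ps.mp_smult ps.mp_mult ps.mp_pderiv ps.mp_X fP mpX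
      by simp
    have k1: "(of_nat n * M) * fls_const (1 / of_nat n) = M"
      using n0 by (simp add: M_def fls_of_nat)
    have k2: "(of_nat n * M) * (fls_const (1 / (of_nat n * of_real d)) * fls_const (1 / of_nat e)) = 1"
      using n0 m0 e0 by (simp add: M_def fls_of_nat dc)
    have "smult (of_nat n * M) Ht = smult (of_nat n * M) P
        - smult ((of_nat n * M) * fls_const (1 / of_nat n)) ([:0, 1:] * pderiv P)
        - smult ((of_nat n * M) * (fls_const (1 / (of_nat n * of_real d)) * fls_const (1 / of_nat e))) (Dh P)"
      unfolding Hpre by (simp only: smult_diff_right smult_smult)
    then show ?thesis unfolding k1 k2 by simp
  qed
  define c where "c i = Dt (a i) - M * a i" for i
  have Ht_sum: "smult (of_nat n * M) Ht = (\<Sum>i<n. smult (c i) (eps n a i))"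
    using euler_prod[of n M a] unfolding Ht_eq by (simp add: P_def c_def eps_def)
  define wv where "wv i = poly Wt (a i)" for i
  define G where "G i = (Wt - [:wv i:]) div [:- a i, 1:]" for i
  have WG: "\<And>i. Wt = [:wv i:] + [:- a i, 1:] * G i"
  proof -
    fix i
    have "[:- a i, 1:] dvd (Wt - [:wv i:])" by (simp add: poly_eq_0_iff_dvd[symmetric] wv_def)
    then have gg: "G i * [:- a i, 1:] = Wt - [:wv i:]" unfolding G_def by (rule dvd_div_mult_self)
    have "Wt = [:wv i:] + (Wt - [:wv i:])" by simp
    also have "\<dots> = [:wv i:] + [:- a i, 1:] * G i" by (simp only: gg[symmetric] mult.commute)
    finally show "Wt = [:wv i:] + [:- a i, 1:] * G i" .
  qed
  have Weps: "\<And>i. i < n \<Longrightarrow> Wt * eps n a i = smult (wv i) (eps n a i) + G i * P"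
  proof -
    fix i assume i: "i < n"
    have "Wt * eps n a i = ([:wv i:] + [:- a i, 1:] * G i) * eps n a i" using WG[of i] by simp
    also have "\<dots> = smult (wv i) (eps n a i) + G i * ([:- a i, 1:] * eps n a i)" by (simp add: algebra_simps)
    finally show "Wt * eps n a i = smult (wv i) (eps n a i) + G i * P"
      unfolding P_def prod_split[OF i] .
  qed
  define rr where "rr i = fls_const (1 / (of_nat n * of_nat m)) * (c i * wv i)" for i
  define G' where "G' = smult (fls_const (1 / (of_nat n * of_nat m))) (\<Sum>i<n. smult (c i) (G i))"
  have WH: "Wt * Ht = (\<Sum>i<n. smult (rr i) (eps n a i)) + G' * P"
  proof -
    have "smult (of_nat n * M) (Wt * Ht) = (\<Sum>i<n. smult (c i) (Wt * eps n a i))"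
      using arg_cong[OF Ht_sum, of "\<lambda>x. Wt * x"] by (simp add: sum_distrib_left mult_smult_right)
    also have "\<dots> = (\<Sum>i<n. smult (c i * wv i) (eps n a i)) + (\<Sum>i<n. smult (c i) (G i)) * P"
      by (simp add: Weps smult_add_right sum.distrib sum_distrib_right)
    finally have *: "smult (of_nat n * M) (Wt * Ht) = (\<Sum>i<n. smult (c i * wv i) (eps n a i)) + (\<Sum>i<n. smult (c i) (G i)) * P" .
    have k: "fls_const (1 / (of_nat n * of_nat m)) * (of_nat n * M) = 1"
      using n0 m0 by (simp add: M_def fls_of_nat)
    have "Wt * Ht = smult (fls_const (1 / (of_nat n * of_nat m))) (smult (of_nat n * M) (Wt * Ht))"
      using k by simp
    also have "\<dots> = (\<Sum>i<n. smult (rr i) (eps n a i)) + G' * P"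
    proof -
      have "smult (fls_const (1 / (of_nat n * of_nat m))) ((\<Sum>i<n. smult (c i) (G i)) * P) = G' * P"
        unfolding G'_def by (subst mult_smult_left[symmetric]) (rule refl)
      moreover have "smult (fls_const (1 / (of_nat n * of_nat m))) (\<Sum>i<n. smult (c i * wv i) (eps n a i))
          = (\<Sum>i<n. smult (rr i) (eps n a i))"
        by (simp add: smult_sum_right rr_def)
      ultimately show ?thesis unfolding * smult_add_right by simp
    qed
    finally show ?thesis .
  qed
  have Rt_eq: "Rt = (\<Sum>i<n. smult (rr i) (eps n a i))"
  proof -
    have e1: "Rt - (\<Sum>i<n. smult (rr i) (eps n a i)) = (G' - Qt) * P"
      using tw WH by (simp add: algebra_simps)
    have dlt: "degree (Rt - (\<Sum>i<n. smult (rr i) (eps n a i))) < n"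
    proof (rule le_less_trans[OF degree_diff_le_max])
      have "degree Rt < n" unfolding Rt_def using qr(4) map_poly_degree_leq le_less_trans by blast
      moreover have "degree (\<Sum>i<n. smult (rr i) (eps n a i)) \<le> n - 1"
        by (rule degree_sum_le) (auto intro: order.trans[OF degree_smult_le] simp: eps_degree)
      ultimately show "max (degree Rt) (degree (\<Sum>i<n. smult (rr i) (eps n a i))) < n" using n0 by simp
    qed
    moreover have "P \<noteq> 0" using leadP by auto
    have "G' - Qt = 0"
    proof (rule ccontr)
      assume "G' - Qt \<noteq> 0"
      then have "degree ((G' - Qt) * P) = degree (G' - Qt) + n" using \<open>P \<noteq> 0\<close> degP by (simp add: degree_mult_eq)
      then show False using e1 dlt by simp
    qed
    then show ?thesis using e1 by simp
  qed
  obtain k0 l0 where kl0: "coeff w l0 $ k0 \<noteq> 0"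
      "\<And>k l. coeff w l $ k \<noteq> 0 \<Longrightarrow> e*k0 + l0*m \<le> e*k + l*m"
    using min_monomial[OF w_nz, of e m] by blast
  define W where "W = e*k0 + l0*m"
  have W_le: "\<And>k l. coeff w l $ k \<noteq> 0 \<Longrightarrow> W \<le> e*k + l*m" using kl0 W_def by blast
  have rho_w: "rho n d w = ereal (real W / real (n*m))"
  proof (rule antisym)
    show "rho n d w \<le> ereal (real W / real (n*m))"
      unfolding d_eq W_def by (rule rho_le[OF n0 m0 e0 kl0(1)])
    show "ereal (real W / real (n*m)) \<le> rho n d w"
      unfolding d_eq
    proof (rule rho_ge[OF n0 m0 e0])
      fix k l assume "coeff w l $ k \<noteq> 0"
      then show "real W \<le> real (e*k + l*m)" using W_le by (simp only: of_nat_le_iff)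
    qed
  qed
  have wv_vge: "\<And>i. i < n \<Longrightarrow> vge (wv i) (int W)"
    unfolding wv_def Wt_def by (rule vge_poly_eval[OF e_pos W_le a_vge])
  have c_vge: "\<And>i. i < n \<Longrightarrow> vge (c i) (int m + 1)"
    unfolding c_def M_def by (rule vge_Dt_shift[OF a_vge])
  have rr_vge: "\<And>i. i < n \<Longrightarrow> vge (rr i) (int W + int m + 1)"
  proof -
    fix i assume i: "i < n"
    have "vge (c i * wv i) (int m + 1 + int W)" by (rule vge_mult[OF c_vge[OF i] wv_vge[OF i]])
    then show "vge (rr i) (int W + int m + 1)" unfolding rr_def
      by (intro vge_constmult) (simp add: algebra_simps)
  qed
  define Lam where "Lam = psi e lam"
  have coeffRt: "coeff Rt (n - 1) = (\<Sum>i<n. rr i)"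
    unfolding Rt_eq coeff_sum coeff_smult using eps_lead[of _ n a] by simp
  have Lam_eq: "Lam = fls_const (1 / of_nat n) * (\<Sum>i<n. rr i)"
    unfolding Lam_def lam_def coeffRt[symmetric] Rt_def using e_pos by (simp add: coeff_map_poly)
  have Lam_vge: "vge Lam (int W + int m + 1)"
    unfolding Lam_eq by (intro vge_constmult vge_sum) (use rr_vge in auto)
  have pderivP: "pderiv P = (\<Sum>i<n. eps n a i)"
    unfolding P_def pderiv_prod eps_def by (simp add: pderiv_pCons)
  have emb_wt: "emb_fls_poly e wt = (\<Sum>i<n. smult (rr i - Lam) (eps n a i))"
  proof -
    have "emb_fls_poly e wt = Rt - smult Lam (pderiv P)"
      unfolding wt_def emb_psi[OF e_pos] wt'_def ps.mp_diff ps.mp_smult ps.mp_pderiv fP Rt_def Lam_def ..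
    also have "\<dots> = (\<Sum>i<n. smult (rr i - Lam) (eps n a i))"
      unfolding Rt_eq pderivP by (simp add: smult_sum_right smult_diff_left sum_subtractf)
    finally show ?thesis .
  qed
  have val_ge: "val n e a wt \<ge> ereal (real_of_int (int W + int m + 1) / real e)"
    unfolding val_def emb_wt
  proof (rule INF_greatest)
    fix i assume "i \<in> {..<n}"
    then have i: "i < n" by simp
    show "ereal (real_of_int (int W + int m + 1) / real e) \<le> nu_pui e (eps_coords n a (\<Sum>i<n. smult (rr i - Lam) (eps n a i)) i)"
      unfolding eps_coords_sum[OF a_dist i]
      by (rule vge_nu[OF _ e_pos], rule vge_diff[OF rr_vge[OF i] Lam_vge])
  qed
  have lam_ge: "nu_fps lam \<ge> ereal (real_of_int (int W + int m + 1) / real e)"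
  proof (cases "lam = 0")
    case False
    define s where "s = subdegree lam"
    have "lam $ s \<noteq> 0" using False by (simp add: s_def)
    then have "Lam $$ int (e * s) \<noteq> 0" unfolding Lam_def using psi_nth_mult[OF e_pos, of lam s] by simp
    then have "int W + int m + 1 \<le> int (e * s)" using Lam_vge by (meson vge_def not_le)
    then have "real_of_int (int W + int m + 1) \<le> real e * real s" by (metis of_int_le_iff of_int_of_nat_eq of_nat_mult)
    then have "real_of_int (int W + int m + 1) / real e \<le> real s" using e0 by (simp add: divide_le_eq mult.commute)
    then show ?thesis using False by (simp add: nu_fps_def s_def)
  qed (simp add: nu_fps_def)
  have target: "ereal (real n * d) * rho n d w + ereal d = ereal ((real W + real m) / real e)"
    unfolding rho_w unfolding d_eq using n0 m0 e0 by (simp add: field_simps)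
  have strict: "ereal ((real W + real m) / real e) < ereal (real_of_int (int W + int m + 1) / real e)"
    using e0 by (simp add: divide_strict_right_mono)
  have I1: "nu_fps lam > ereal (real n * d) * rho n d w + ereal d"
    unfolding target using strict lam_ge by (rule less_le_trans)
  have I4: "val n e a wt > ereal (real n * d) * rho n d w + ereal d"
    unfolding target using strict val_ge by (rule less_le_trans)
  have rho_h: "rho n d h \<ge> ereal (real (n*m + 1) / real (n*m))"
    unfolding d_eq
  proof (rule rho_ge[OF n0 m0 e0])
    fix k l assume "coeff h l $ k \<noteq> 0"
    then show "real (n*m + 1) \<le> real (e*k + l*m)" using h_wt by (simp only: of_nat_le_iff)
  qed
  have I3: "rho n d w + rho n d h - 1 > rho n d w"
  proof (cases "rho n d h")
    case (real x)
    then have "x \<ge> real (n*m + 1) / real (n*m)" using rho_h by simp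
    moreover have "real (n*m + 1) / real (n*m) = 1 + 1 / real (n*m)" using n0 m0 by (simp add: field_simps)
    moreover have "0 < 1 / (real (n * m))" using n0 m0 by simp
    ultimately have "x - 1 > 0" by linarith
    then show ?thesis unfolding rho_w real by (simp add: one_ereal_def)
  qed (use rho_h rho_w in auto)
  have I2: "rho n d q \<ge> rho n d w + rho n d h - 1"
  proof (cases "q = 0")
    case True then show ?thesis by (simp add: rho_zero)
  next
    case False
    obtain k1 l1 where kl1: "coeff q l1 $ k1 \<noteq> 0"
        "\<And>k l. coeff q l $ k \<noteq> 0 \<Longrightarrow> e*k1 + l1*m \<le> e*k + l*m"
      using min_monomial[OF False, of e m] by blast
    define s0 where "s0 = e*k1 + l1*m"
    have qmin: "\<And>k l. coeff q l $ k \<noteq> 0 \<Longrightarrow> s0 \<le> e*k + l*m" using kl1 s0_def by blast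
    define L where "L = {l. \<exists>k. coeff q l $ k \<noteq> 0 \<and> e*k + l*m = s0}"
    have Lfin: "finite L"
    proof (rule finite_subset[of _ "{..degree q}"])
      show "L \<subseteq> {..degree q}" unfolding L_def by (auto intro: le_degree)
    qed simp
    have l1L: "l1 \<in> L" using kl1(1) by (auto simp: L_def s0_def)
    define lx where "lx = Max L"
    have "lx \<in> L" using Lfin l1L lx_def by (metis Max_in empty_iff)
    then obtain kx where kx: "coeff q lx $ kx \<noteq> 0" "e*kx + lx*m = s0" by (auto simp: L_def)
    have qmax: "\<And>k l. coeff q l $ k \<noteq> 0 \<Longrightarrow> e*k + l*m = s0 \<Longrightarrow> l \<le> lx"
      using Lfin lx_def by (auto simp: L_def intro!: Max_ge)
    have T: "\<And>i j. i \<le> lx + n \<Longrightarrow> j \<le> kx \<Longrightarrow>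
        coeff q i $ j * coeff f (lx + n - i) $ (kx - j) = (if j = kx then (if i = lx then coeff q lx $ kx else 0) else 0)"
    proof -
      fix i j assume ij: "i \<le> lx + n" "j \<le> kx"
      show "coeff q i $ j * coeff f (lx + n - i) $ (kx - j) = (if j = kx then (if i = lx then coeff q lx $ kx else 0) else 0)"
      proof (cases "i = lx \<and> j = kx")
        case True then show ?thesis by (simp add: fn1)
      next
        case False
        have "coeff q i $ j = 0 \<or> coeff f (lx + n - i) $ (kx - j) = 0"
        proof (rule ccontr)
          assume "\<not> ?thesis"
          then have nz1: "coeff q i $ j \<noteq> 0" and nz2: "coeff f (lx + n - i) $ (kx - j) \<noteq> 0" by auto
          have A: "s0 \<le> e*j + i*m" using qmin[OF nz1] .
          have B: "n*m \<le> e*(kx - j) + (lx + n - i)*m" using f_wt[OF nz2] .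
          have "lx + n - i \<le> n" using nz2 f_hi by (metis fps_zero_nth not_le)
          then have C: "lx \<le> i" by simp
          have D1: "e*(kx - j) + e*j = e*kx" using ij by (simp add: diff_mult_distrib2)
          have im: "i*m \<le> lx*m + n*m" using mult_le_mono1[OF ij(1), of m] by (simp add: add_mult_distrib)
          have D2: "(lx + n - i)*m + i*m = lx*m + n*m" using im by (simp only: diff_mult_distrib add_mult_distrib)
          have tight: "e*j + i*m = s0" using A B D1 D2 kx(2) by linarith
          then have "i \<le> lx" using qmax[OF nz1] by simp
          then have "i = lx" using C by simp
          then have "e*j + lx*m = s0" using tight by simp
          then have "e*j = e*kx" using kx(2) by linarith
          then have "j = kx" using e0 by (metis mult_left_cancel not_less0 zero_less_iff_neq_zero)
          then show False using False \<open>i = lx\<close> by simp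
        qed
        then show ?thesis using False by auto
      qed
    qed
    have qf_coeff: "coeff (q * f) (lx + n) $ kx = coeff q lx $ kx"
    proof -
      have "coeff (q * f) (lx + n) $ kx = (\<Sum>i\<le>lx + n. \<Sum>j=0..kx. coeff q i $ j * coeff f (lx + n - i) $ (kx - j))"
        unfolding coeff_mult fps_sum_nth fps_mult_nth ..
      also have "\<dots> = (\<Sum>i\<le>lx + n. \<Sum>j=0..kx. (if j = kx then (if i = lx then coeff q lx $ kx else 0) else 0))"
        by (intro sum.cong refl) (simp add: T)
      also have "\<dots> = (\<Sum>i\<le>lx + n. (if i = lx then coeff q lx $ kx else 0))"
        by (intro sum.cong refl) (simp add: sum.delta)
      also have "\<dots> = coeff q lx $ kx" by (simp add: sum.delta)
      finally show ?thesis .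
    qed
    have "coeff r (lx + n) = 0" using qr(4) by (simp add: coeff_eq_0)
    then have "coeff (w * h) (lx + n) $ kx \<noteq> 0" using qf_coeff kx(1) unfolding qr(3) by simp
    from poly_mult_monomial_nz[OF this] obtain i j where ij: "i \<le> lx + n" "j \<le> kx"
      "coeff w i $ j \<noteq> 0" "coeff h (lx + n - i) $ (kx - j) \<noteq> 0" by blast
    define Wh where "Wh = e*(kx - j) + (lx + n - i)*m"
    have rho_h_le: "rho n d h \<le> ereal (real Wh / real (n*m))"
      unfolding d_eq Wh_def by (rule rho_le[OF n0 m0 e0 ij(4)])
    have "W \<le> e*j + i*m" using W_le[OF ij(3)] .
    moreover have D1: "e*(kx - j) + e*j = e*kx" using ij by (simp add: diff_mult_distrib2)
    moreover have D2: "(lx + n - i)*m + i*m = lx*m + n*m"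
    proof -
      have im: "i*m \<le> lx*m + n*m" using mult_le_mono1[OF ij(1), of m] by (simp add: add_mult_distrib)
      then show ?thesis by (simp only: diff_mult_distrib add_mult_distrib)
    qed
    ultimately have WW: "W + Wh \<le> s0 + n*m" using kx(2) unfolding Wh_def by linarith
    have rho_q: "ereal (real s0 / real (n*m)) \<le> rho n d q"
      unfolding d_eq
    proof (rule rho_ge[OF n0 m0 e0])
      fix k l assume "coeff q l $ k \<noteq> 0"
      then show "real s0 \<le> real (e*k + l*m)" using qmin by (simp only: of_nat_le_iff)
    qed
    have "rho n d w + rho n d h - 1 \<le> ereal (real W / real (n*m)) + ereal (real Wh / real (n*m)) - 1"
      by (rule ereal_minus_mono, rule add_mono) (use rho_h_le in \<open>simp_all add: rho_w\<close>)
    also have "\<dots> = ereal ((real W + real Wh) / real (n*m) - 1)" by (simp add: one_ereal_def add_divide_distrib)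
    also have "\<dots> \<le> ereal (real s0 / real (n*m))"
    proof -
      have "real W + real Wh \<le> real s0 + real (n*m)" using WW by (metis of_nat_add of_nat_le_iff)
      then have "(real W + real Wh) / real (n*m) \<le> (real s0 + real (n*m)) / real (n*m)"
        by (simp add: divide_right_mono)
      also have "\<dots> = real s0 / real (n*m) + 1" using n0 m0 by (simp add: field_simps)
      finally show ?thesis by simp
    qed
    also have "\<dots> \<le> rho n d q" by (rule rho_q)
    finally show ?thesis .
  qed
  show ?thesis
    apply (rule exI[of _ q], rule exI[of _ lam], rule exI[of _ wt])
    using qr(1) lam_conv deg_wt eqn I1 I2 I3 I4 by (simp add: d_def h_def)
qed
end
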